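(* Let $k$ be any field and $d$ a positive integer. For every $u\in k_0\langle X\rangle$, $[S_d(x_1,\ldots,x_d),u]\in R_1^{(d)}$.
   Context: $X=\{x_1,x_2,\ldots\}$ is a countably infinite set and $k_0\langle X\rangle$ is the free associative $k$-algebra (without identity) on $X$. A $T$-space is a $k$-linear subspace closed under every algebra endomorphism of $k_0\langle X\rangle$; the $T$-space generated by a subset is the smallest $T$-space containing it. $S_d(v_1,\ldots,v_d)=\sum_{\sigma\in\Sigma_d}\prod_{i=1}^d v_{\sigma(i)}$, and $R_1^{(d)}$ is the $T$-space generated by $S_d(x_1,\ldots,x_d)$. $[a,b]=ab-ba$. *)

theory Defs
  imports Main "HOL-Combinatorics.Permutations"
begin

text \<open>The free associative k-algebra without identity on generators x_0, x_1, ...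
  (indexed by nat): an element is a finitely supported coefficient function on words
  (lists of generator indices) with zero coefficient on the empty word.\<close>

type_synonym 'k fa = "nat list \<Rightarrow> 'k"

definition FA :: "('k::field) fa set" where
  "FA = {f. finite {w. f w \<noteq> 0} \<and> f [] = 0}"

definition fa_add :: "('k::field) fa \<Rightarrow> 'k fa \<Rightarrow> 'k fa" where
  "fa_add f g = (\<lambda>w. f w + g w)"

definition fa_sub :: "('k::field) fa \<Rightarrow> 'k fa \<Rightarrow> 'k fa" where
  "fa_sub f g = (\<lambda>w. f w - g w)"

definition fa_smult :: "'k::field \<Rightarrow> 'k fa \<Rightarrow> 'k fa" where
  "fa_smult c f = (\<lambda>w. c * f w)"

definition fa_zero :: "('k::field) fa" where
  "fa_zero = (\<lambda>w. 0)"

definition fa_mult :: "('k::field) fa \<Rightarrow> 'k fa \<Rightarrow> 'k fa" where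
  "fa_mult f g = (\<lambda>w. \<Sum>i\<le>length w. f (take i w) * g (drop i w))"

definition fa_var :: "nat \<Rightarrow> ('k::field) fa" where
  "fa_var i = (\<lambda>w. if w = [i] then 1 else 0)"

definition fa_comm :: "('k::field) fa \<Rightarrow> 'k fa \<Rightarrow> 'k fa" where
  "fa_comm a b = fa_sub (fa_mult a b) (fa_mult b a)"

fun fa_listprod :: "('k::field) fa list \<Rightarrow> 'k fa" where
  "fa_listprod [] = fa_zero"
| "fa_listprod [v] = v"
| "fa_listprod (v # vs) = fa_mult v (fa_listprod vs)"

definition fa_endo :: "(('k::field) fa \<Rightarrow> 'k fa) \<Rightarrow> bool" where
  "fa_endo \<phi> \<longleftrightarrow>
     (\<forall>f\<in>FA. \<phi> f \<in> FA) \<and>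
     (\<forall>f\<in>FA. \<forall>g\<in>FA. \<phi> (fa_add f g) = fa_add (\<phi> f) (\<phi> g)) \<and>
     (\<forall>c. \<forall>f\<in>FA. \<phi> (fa_smult c f) = fa_smult c (\<phi> f)) \<and>
     (\<forall>f\<in>FA. \<forall>g\<in>FA. \<phi> (fa_mult f g) = fa_mult (\<phi> f) (\<phi> g))"

definition fa_subspace :: "('k::field) fa set \<Rightarrow> bool" where
  "fa_subspace V \<longleftrightarrow> V \<subseteq> FA \<and> fa_zero \<in> V \<and>
     (\<forall>f\<in>V. \<forall>g\<in>V. fa_add f g \<in> V) \<and> (\<forall>c. \<forall>f\<in>V. fa_smult c f \<in> V)"

definition T_space :: "('k::field) fa set \<Rightarrow> bool" where
  "T_space V \<longleftrightarrow> fa_subspace V \<and> (\<forall>\<phi>. fa_endo \<phi> \<longrightarrow> (\<forall>f\<in>V. \<phi> f \<in> V))"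

definition T_gen :: "('k::field) fa set \<Rightarrow> 'k fa set" where
  "T_gen S = \<Inter>{V. T_space V \<and> S \<subseteq> V}"

text \<open>S_d(v_1,...,v_d) = sum over permutations sigma of prod_i v_{sigma(i)};
  here v is indexed by 0..d-1.\<close>
definition S_poly :: "nat \<Rightarrow> (nat \<Rightarrow> ('k::field) fa) \<Rightarrow> 'k fa" where
  "S_poly d v = (\<lambda>w. \<Sum>\<sigma>\<in>{\<sigma>. \<sigma> permutes {0..<d}}.
                     fa_listprod (map (\<lambda>i. v (\<sigma> i)) [0..<d]) w)"

end

theory Submission imports Defs "HOL-Library.Poly_Mapping" begin

instantiation list :: (type) monoid_add
begin
definition zero_list_def: "(0::'a list) = []"
definition plus_list_def: "(xs::'a list) + ys = xs @ ys"
instance by standard (simp_all add: zero_list_def plus_list_def)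
end

type_synonym 'k R = "nat list \<Rightarrow>\<^sub>0 'k"

lemma lookup_mult_split:
  fixes p q :: "('k::field) R"
  shows "Poly_Mapping.lookup (p * q) w =
     (\<Sum>i\<le>length w. Poly_Mapping.lookup p (take i w) * Poly_Mapping.lookup q (drop i w))"
proof -
  let ?f = "Poly_Mapping.lookup p" and ?g = "Poly_Mapping.lookup q"
  have fin: "finite {k. ?f k \<noteq> 0}" "finite {k. ?g k \<noteq> 0}"
    by (simp_all add: keys.rep_eq[symmetric])
  have "Poly_Mapping.lookup (p * q) w = prod_fun ?f ?g w"
    by (simp add: times_poly_mapping.rep_eq)
  also have "\<dots> = (\<Sum>(a, b). ?f a * ?g b when w = a + b)"
    by (rule prod_fun_unfold_prod[OF fin])
  also have "\<dots> = sum (\<lambda>(a, b). ?f a * ?g b when w = a + b) ((\<lambda>i. (take i w, drop i w)) ` {..length w})"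
  proof (rule Sum_any.expand_superset)
    show "{ab. (case ab of (a, b) \<Rightarrow> ?f a * ?g b when w = a + b) \<noteq> 0}
       \<subseteq> (\<lambda>i. (take i w, drop i w)) ` {..length w}"
    proof
      fix ab assume "ab \<in> {ab. (case ab of (a, b) \<Rightarrow> ?f a * ?g b when w = a + b) \<noteq> 0}"
      then obtain a b where ab: "ab = (a, b)" "w = a @ b"
        by (cases ab) (auto simp: plus_list_def split: if_splits)
      then show "ab \<in> (\<lambda>i. (take i w, drop i w)) ` {..length w}"
        by (auto intro!: image_eqI[where x="length a"])
    qed
  qed simp
  also have "\<dots> = (\<Sum>i\<le>length w. ?f (take i w) * ?g (drop i w))"
    by (subst sum.reindex) (auto simp: inj_on_def plus_list_def, metis length_take min.absorb2)
  finally show ?thesis .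
qed

definition sc :: "'k::field \<Rightarrow> 'k R \<Rightarrow> 'k R" where
  "sc a r = Poly_Mapping.single [] a * r"

lemma lookup_sc[simp]: "Poly_Mapping.lookup (sc a r) w = a * Poly_Mapping.lookup r w"
proof -
  have "Poly_Mapping.lookup (sc a r) w = (\<Sum>i\<le>length w. Poly_Mapping.lookup (Poly_Mapping.single [] a) (take i w) * Poly_Mapping.lookup r (drop i w))"
    unfolding sc_def by (rule lookup_mult_split)
  also have "\<dots> = (\<Sum>i\<in>{0}. Poly_Mapping.lookup (Poly_Mapping.single [] a) (take i w) * Poly_Mapping.lookup r (drop i w))"
    by (rule sum.mono_neutral_right) (auto simp: lookup_single)
  finally show ?thesis by simp
qed

lemma lookup_mult_single_right: "Poly_Mapping.lookup ((r::'k::field R) * Poly_Mapping.single [] a) w = Poly_Mapping.lookup r w * (a::'k::field)"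
proof -
  have "Poly_Mapping.lookup (r * Poly_Mapping.single [] a) w = (\<Sum>i\<le>length w. Poly_Mapping.lookup r (take i w) * Poly_Mapping.lookup (Poly_Mapping.single [] a) (drop i w))"
    by (rule lookup_mult_split)
  also have "\<dots> = (\<Sum>i\<in>{length w}. Poly_Mapping.lookup r (take i w) * Poly_Mapping.lookup (Poly_Mapping.single [] a) (drop i w))"
    by (rule sum.mono_neutral_right) (auto simp: lookup_single)
  finally show ?thesis by simp
qed

lemma sc_comm: "sc a (r::'k::field R) = r * Poly_Mapping.single [] (a::'k::field)"
  by (rule poly_mapping_eqI) (simp add: lookup_mult_single_right mult.commute)

lemma single_comm: "Poly_Mapping.single [] (a::'k::field) * (r::'k R) = r * Poly_Mapping.single [] a"
  using sc_comm[of a r] by (simp add: sc_def)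

lemma sc_mult_left: "sc a (x * y) = sc a x * y"
  by (simp add: sc_def mult.assoc)

lemma sc_mult_right: "x * sc a y = sc a (x * (y::'k::field R))"
  unfolding sc_def by (metis mult.assoc single_comm)

lemma sc_sc: "sc a (sc b r) = sc (a * b) r"
  by (rule poly_mapping_eqI) simp

lemma sc_add_left: "sc (a + b) r = sc a r + sc b r"
  by (rule poly_mapping_eqI) (simp add: lookup_add algebra_simps)

lemma sc_add_right: "sc a (r + s) = sc a r + sc a s"
  by (rule poly_mapping_eqI) (simp add: lookup_add algebra_simps)

lemma sc_zero[simp]: "sc 0 r = 0" "sc a 0 = 0"
  by (rule poly_mapping_eqI, simp)+

lemma sc_one[simp]: "sc 1 r = r"
  by (rule poly_mapping_eqI) simp

lemma sc_sum: "sc a (sum f A) = (\<Sum>x\<in>A. sc a (f x))"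
  by (simp add: sc_def sum_distrib_left)

definition P :: "(nat \<Rightarrow> ('k::field) R) \<Rightarrow> nat list \<Rightarrow> 'k R" where
  "P s w = prod_list (map s w)"

definition Phi :: "(nat \<Rightarrow> ('k::field) R) \<Rightarrow> 'k R \<Rightarrow> 'k R" where
  "Phi s p = (\<Sum>w\<in>Poly_Mapping.keys p. sc (Poly_Mapping.lookup p w) (P s w))"

lemma Phi_superset:
  assumes "finite A" "Poly_Mapping.keys p \<subseteq> A"
  shows "Phi s p = (\<Sum>w\<in>A. sc (Poly_Mapping.lookup p w) (P s w))"
  unfolding Phi_def
  by (rule sum.mono_neutral_left) (use assms in \<open>auto simp: in_keys_iff\<close>)

lemma Phi_zero[simp]: "Phi s 0 = 0"
  by (simp add: Phi_def)

lemma Phi_add: "Phi s (p + q) = Phi s p + Phi s q"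
proof -
  let ?A = "Poly_Mapping.keys p \<union> Poly_Mapping.keys q"
  have "Phi s (p + q) = (\<Sum>w\<in>?A. sc (Poly_Mapping.lookup (p+q) w) (P s w))"
    by (rule Phi_superset) (auto simp: keys_add)
  also have "\<dots> = (\<Sum>w\<in>?A. sc (Poly_Mapping.lookup p w) (P s w)) + (\<Sum>w\<in>?A. sc (Poly_Mapping.lookup q w) (P s w))"
    by (simp add: lookup_add sc_add_left sum.distrib)
  also have "\<dots> = Phi s p + Phi s q"
    by (simp add: Phi_superset[symmetric])
  finally show ?thesis .
qed

lemma Phi_sum: "Phi s (sum f A) = (\<Sum>x\<in>A. Phi s (f x))"
  by (induction A rule: infinite_finite_induct) (simp_all add: Phi_add)

lemma Phi_single: "Phi s (Poly_Mapping.single w a) = sc a (P s w)"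
proof -
  have "Phi s (Poly_Mapping.single w a) = (\<Sum>v\<in>{w}. sc (Poly_Mapping.lookup (Poly_Mapping.single w a) v) (P s v))"
    by (rule Phi_superset) auto
  then show ?thesis by simp
qed

lemma Phi_sc: "Phi s (sc a p) = sc a (Phi s p)"
proof -
  have "Phi s (sc a p) = (\<Sum>w\<in>Poly_Mapping.keys p. sc (Poly_Mapping.lookup (sc a p) w) (P s w))"
    by (rule Phi_superset) (auto simp: in_keys_iff)
  then show ?thesis by (simp add: Phi_def sc_sum sc_sc)
qed

lemma update_eq_add: "k \<notin> Poly_Mapping.keys f \<Longrightarrow> Poly_Mapping.update k b f = f + Poly_Mapping.single k b"
  by (rule poly_mapping_eqI) (auto simp: lookup_update lookup_add lookup_single in_keys_iff)

lemma P_append: "P s (v @ w) = P s v * P s w"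
  by (simp add: P_def)

lemma Phi_single_mult: "Phi s (Poly_Mapping.single a b * q) = Phi s (Poly_Mapping.single a b) * Phi s q"
proof (induction q rule: Poly_Mapping.update_induct)
  case const then show ?case by simp
next
  case (update f c e)
  have "Phi s (Poly_Mapping.single a b * Poly_Mapping.single c e) = sc b (P s a) * sc e (P s c)"
    by (simp add: mult_single Phi_single plus_list_def P_append sc_mult_left sc_mult_right sc_sc mult.commute)
  then show ?case using update
    by (simp add: update_eq_add distrib_left Phi_add Phi_single)
qed

lemma Phi_mult: "Phi s (p * q) = Phi s p * Phi s q"
proof (induction p rule: Poly_Mapping.update_induct)
  case const then show ?case by simp
next
  case (update f c e)
  then show ?case
    by (simp add: update_eq_add distrib_right Phi_add Phi_single_mult)
qed

lemma Phi_one: "Phi s (1::'k::field R) = 1"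
proof -
  have e: "(1::'k R) = Poly_Mapping.single [] 1" by (simp add: zero_list_def[symmetric])
  show ?thesis by (subst e, subst Phi_single) (simp add: P_def)
qed

lemma Phi_var: "Phi s (Poly_Mapping.single [i] 1) = s i"
  by (simp add: Phi_single P_def)

lemma Phi_prod_list: "Phi s (prod_list xs) = prod_list (map (Phi s) xs)"
  by (induction xs) (simp_all add: Phi_one Phi_mult)

lemma lookup_mult_Nil: "Poly_Mapping.lookup (p * q) [] = Poly_Mapping.lookup p [] * Poly_Mapping.lookup (q::'k::field R) []"
  by (simp add: lookup_mult_split)

lemma lookup_P_Nil:
  assumes "\<forall>i. Poly_Mapping.lookup (s i) [] = 0" "w \<noteq> []"
  shows "Poly_Mapping.lookup (P s w) [] = 0"
  using assms(2) by (cases w) (simp_all add: P_def lookup_mult_Nil assms(1))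

lemma lookup_Phi_Nil:
  assumes "\<forall>i. Poly_Mapping.lookup (s i) [] = 0" "Poly_Mapping.lookup p [] = 0"
  shows "Poly_Mapping.lookup (Phi s p) [] = 0"
  unfolding Phi_def lookup_sum
proof (rule sum.neutral, intro ballI)
  fix x assume "x \<in> Poly_Mapping.keys p"
  then have "x \<noteq> []" using assms(2) by (auto simp: in_keys_iff)
  then show "Poly_Mapping.lookup (sc (Poly_Mapping.lookup p x) (P s x)) [] = 0"
    using lookup_P_Nil[OF assms(1)] by simp
qed


lemma FA_lookup_Abs: "f \<in> FA \<Longrightarrow> Poly_Mapping.lookup (Abs_poly_mapping f) = f"
  by (simp add: FA_def)

lemma FA_obtain:
  assumes "f \<in> FA"
  obtains F where "f = Poly_Mapping.lookup F" "Poly_Mapping.lookup F [] = (0::'k::field)"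
  using that[of "Abs_poly_mapping f"] FA_lookup_Abs[OF assms] assms by (simp add: FA_def)

lemma lookup_in_FA: "Poly_Mapping.lookup p [] = 0 \<Longrightarrow> Poly_Mapping.lookup (p::'k::field R) \<in> FA"
  by (simp add: FA_def keys.rep_eq[symmetric])

lemma fa_mult_lookup: "fa_mult (Poly_Mapping.lookup p) (Poly_Mapping.lookup q) = Poly_Mapping.lookup (p * (q::'k::field R))"
  by (simp add: fun_eq_iff fa_mult_def lookup_mult_split)

lemma fa_add_lookup: "fa_add (Poly_Mapping.lookup p) (Poly_Mapping.lookup q) = Poly_Mapping.lookup (p + (q::'k::field R))"
  by (simp add: fun_eq_iff fa_add_def lookup_add)

lemma fa_sub_lookup: "fa_sub (Poly_Mapping.lookup p) (Poly_Mapping.lookup q) = Poly_Mapping.lookup (p - (q::'k::field R))"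
  by (simp add: fun_eq_iff fa_sub_def lookup_minus)

lemma fa_smult_lookup: "fa_smult c (Poly_Mapping.lookup p) = Poly_Mapping.lookup (sc c (p::'k::field R))"
  by (simp add: fun_eq_iff fa_smult_def)

lemma fa_zero_lookup: "fa_zero = Poly_Mapping.lookup (0::'k::field R)"
  by (simp add: fun_eq_iff fa_zero_def)

definition phi :: "(nat \<Rightarrow> ('k::field) R) \<Rightarrow> 'k fa \<Rightarrow> 'k fa" where
  "phi s f = Poly_Mapping.lookup (Phi s (Abs_poly_mapping f))"

lemma phi_lookup[simp]: "phi s (Poly_Mapping.lookup p) = Poly_Mapping.lookup (Phi s p)"
  by (simp add: phi_def)

lemma phi_endo:
  assumes "\<forall>i. Poly_Mapping.lookup (s i) [] = (0::'k::field)"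
  shows "fa_endo (phi s)"
  unfolding fa_endo_def
proof (intro conjI ballI allI)
  fix f :: "'k fa" assume "f \<in> FA"
  then obtain F where F: "f = Poly_Mapping.lookup F" "Poly_Mapping.lookup F [] = 0" by (rule FA_obtain)
  show "phi s f \<in> FA" using F by (simp add: lookup_in_FA lookup_Phi_Nil assms)
  fix c show "phi s (fa_smult c f) = fa_smult c (phi s f)"
    using F by (simp add: fa_smult_lookup Phi_sc)
next
  fix f g :: "'k fa" assume "f \<in> FA" "g \<in> FA"
  obtain F where F: "f = Poly_Mapping.lookup F" using FA_obtain[OF \<open>f \<in> FA\<close>] by blast
  obtain G where G: "g = Poly_Mapping.lookup G" using FA_obtain[OF \<open>g \<in> FA\<close>] by blast
  show "phi s (fa_add f g) = fa_add (phi s f) (phi s g)"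
    using F G by (simp add: fa_add_lookup Phi_add)
  show "phi s (fa_mult f g) = fa_mult (phi s f) (phi s g)"
    using F G by (simp add: fa_mult_lookup Phi_mult)
qed

lemma fa_listprod_lookup:
  "xs \<noteq> [] \<Longrightarrow> fa_listprod (map Poly_Mapping.lookup xs) = Poly_Mapping.lookup (prod_list (xs::'k::field R list))"
proof (induction xs)
  case Nil then show ?case by simp
next
  case (Cons x xs)
  show ?case
  proof (cases xs)
    case Nil then show ?thesis by simp
  next
    case (Cons y ys)
    then show ?thesis using Cons.IH by (simp add: fa_mult_lookup)
  qed
qed

lemma T_space_sum:
  assumes "T_space V" "finite I" "\<forall>i\<in>I. Poly_Mapping.lookup (g i) \<in> V"
  shows "Poly_Mapping.lookup (sum g I :: 'k::field R) \<in> V"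
  using assms(2,3)
proof (induction I rule: finite_induct)
  case empty then show ?case using assms(1) by (simp add: T_space_def fa_subspace_def fa_zero_lookup[symmetric])
next
  case (insert i I)
  then show ?case using assms(1) by (simp add: T_space_def fa_subspace_def fa_add_lookup[symmetric])
qed

lemma comm_list:
  fixes ys :: "'a::ring_1 list"
  shows "(\<Sum>k<length ys. prod_list (ys[k := ys!k * U - U * ys!k])) = prod_list ys * U - U * prod_list ys"
proof (induction ys)
  case Nil then show ?case by simp
next
  case (Cons y ys)
  have "(\<Sum>k<length (y # ys). prod_list ((y # ys)[k := (y # ys)!k * U - U * (y # ys)!k]))
     = (y * U - U * y) * prod_list ys + (\<Sum>k<length ys. y * prod_list (ys[k := ys!k * U - U * ys!k]))"
    by (simp only: length_Cons sum.lessThan_Suc_shift list_update_code nth_Cons_0 nth_Cons_Suc prod_list.Cons)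
  also have "\<dots> = (y * U - U * y) * prod_list ys + y * (prod_list ys * U - U * prod_list ys)"
    by (simp only: sum_distrib_left[symmetric] Cons.IH)
  also have "\<dots> = prod_list (y # ys) * U - U * prod_list (y # ys)"
    by (simp add: algebra_simps)
  finally show ?case .
qed

definition Xv :: "nat \<Rightarrow> ('k::field) R" where
  "Xv m = Poly_Mapping.single [m] 1"

definition ys :: "(nat \<Rightarrow> nat) \<Rightarrow> nat \<Rightarrow> ('k::field) R list" where
  "ys \<sigma> d = map (\<lambda>j. Xv (Suc (\<sigma> j))) [0..<d]"

definition sub :: "'k R \<Rightarrow> nat \<Rightarrow> nat \<Rightarrow> ('k::field) R" where
  "sub U i m = (if m = Suc i then Xv m * U - U * Xv m else Xv m)"

lemma per_sigma:
  fixes U :: "'k::field R"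
  assumes "\<sigma> permutes {0..<d}"
  shows "(\<Sum>i<d. Phi (sub U i) (prod_list (ys \<sigma> d))) = prod_list (ys \<sigma> d) * U - U * prod_list (ys \<sigma> d)"
proof -
  have bij: "bij_betw \<sigma> {..<d} {..<d}"
    using permutes_imp_bij[OF assms] by (simp add: lessThan_atLeast0)
  have inj: "inj \<sigma>" using permutes_inj[OF assms] .
  have "(\<Sum>i<d. Phi (sub U i) (prod_list (ys \<sigma> d))) = (\<Sum>k<d. Phi (sub U (\<sigma> k)) (prod_list (ys \<sigma> d)))"
    by (rule sum.reindex_bij_betw[OF bij, symmetric])
  also have "\<dots> = (\<Sum>k<length (ys \<sigma> d :: 'k R list). prod_list ((ys \<sigma> d)[k := (ys \<sigma> d)!k * U - U * (ys \<sigma> d)!k]))"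
  proof (rule sum.cong)
    show "{..<d} = {..<length (ys \<sigma> d :: 'k R list)}" by (simp add: ys_def)
  next
    fix k assume "k \<in> {..<length (ys \<sigma> d :: 'k R list)}"
    then have k: "k < d" by (simp add: ys_def)
    have "Phi (sub U (\<sigma> k)) (prod_list (ys \<sigma> d)) = prod_list (map (\<lambda>j. sub U (\<sigma> k) (Suc (\<sigma> j))) [0..<d])"
      by (simp add: ys_def Phi_prod_list o_def Xv_def Phi_var)
    moreover have "map (\<lambda>j. sub U (\<sigma> k) (Suc (\<sigma> j))) [0..<d] = (ys \<sigma> d)[k := (ys \<sigma> d)!k * U - U * (ys \<sigma> d)!k]"
      by (rule nth_equalityI) (use k inj in \<open>auto simp: ys_def sub_def nth_list_update inj_eq\<close>)
    ultimately show "Phi (sub U (\<sigma> k)) (prod_list (ys \<sigma> d)) = prod_list ((ys \<sigma> d)[k := (ys \<sigma> d)!k * U - U * (ys \<sigma> d)!k])" by simp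
  qed
  also have "\<dots> = prod_list (ys \<sigma> d) * U - U * prod_list (ys \<sigma> d)"
    by (rule comm_list)
  finally show ?thesis .
qed


lemma lookup_sub_Nil: "Poly_Mapping.lookup (sub U i m) [] = (0::'k::field)"
  by (simp add: sub_def Xv_def lookup_minus lookup_mult_Nil lookup_single)

lemma fa_var_lookup: "fa_var m = Poly_Mapping.lookup (Xv m :: ('k::field) R)"
  by (auto simp: fun_eq_iff fa_var_def Xv_def lookup_single when_def)

theorem corollary2p1:
  fixes d :: nat and u :: "('k::field) fa"
  assumes "0 < d" and "u \<in> FA"
  shows "fa_comm (S_poly d (\<lambda>i. fa_var (Suc i))) u
           \<in> T_gen {S_poly d (\<lambda>i. fa_var (Suc i)) :: 'k fa}"
proof -
  define U where "U = (Abs_poly_mapping u :: 'k R)"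
  have uU: "u = Poly_Mapping.lookup U" using FA_lookup_Abs[OF assms(2)] by (simp add: U_def)
  define Perms where "Perms = {\<sigma>. \<sigma> permutes {0..<d}}"
  have finP: "finite Perms" unfolding Perms_def by (rule finite_permutations) simp
  define SR :: "'k R" where "SR = (\<Sum>\<sigma>\<in>Perms. prod_list (ys \<sigma> d))"
  have S_eq: "S_poly d (\<lambda>i. fa_var (Suc i)) = Poly_Mapping.lookup SR"
  proof -
    have "fa_listprod (map (\<lambda>i. fa_var (Suc (\<sigma> i))) [0..<d]) = Poly_Mapping.lookup (prod_list (ys \<sigma> d :: 'k R list))" for \<sigma>
    proof -
      have "map (\<lambda>i. fa_var (Suc (\<sigma> i))) [0..<d] = map Poly_Mapping.lookup (ys \<sigma> d :: 'k R list)"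
        by (simp add: ys_def fa_var_lookup)
      moreover have "(ys \<sigma> d :: 'k R list) \<noteq> []" using assms(1) by (simp add: ys_def)
      ultimately show ?thesis by (simp add: fa_listprod_lookup)
    qed
    then show ?thesis
      by (simp add: fun_eq_iff S_poly_def SR_def lookup_sum Perms_def)
  qed
  have "SR * U - U * SR = (\<Sum>\<sigma>\<in>Perms. prod_list (ys \<sigma> d) * U - U * prod_list (ys \<sigma> d))"
    by (simp add: SR_def sum_distrib_left sum_distrib_right sum_subtractf)
  also have "\<dots> = (\<Sum>\<sigma>\<in>Perms. \<Sum>i<d. Phi (sub U i) (prod_list (ys \<sigma> d)))"
    by (rule sum.cong) (simp_all add: Perms_def per_sigma)
  also have "\<dots> = (\<Sum>i<d. \<Sum>\<sigma>\<in>Perms. Phi (sub U i) (prod_list (ys \<sigma> d)))"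
    by (rule sum.swap)
  also have "\<dots> = (\<Sum>i<d. Phi (sub U i) SR)"
    by (simp add: SR_def Phi_sum)
  finally have comm_eq: "SR * U - U * SR = (\<Sum>i<d. Phi (sub U i) SR)" .
  have comm: "fa_comm (Poly_Mapping.lookup SR) u = Poly_Mapping.lookup (\<Sum>i<d. Phi (sub U i) SR)"
    by (simp add: uU fa_comm_def fa_mult_lookup fa_sub_lookup comm_eq)
  show ?thesis
    unfolding T_gen_def S_eq
  proof (rule InterI)
    fix V assume "V \<in> {V. T_space V \<and> {Poly_Mapping.lookup SR} \<subseteq> V}"
    then have V: "T_space V" "Poly_Mapping.lookup SR \<in> V" by auto
    have "\<forall>i\<in>{..<d}. Poly_Mapping.lookup (Phi (sub U i) SR) \<in> V"
    proof
      fix i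
      have "fa_endo (phi (sub U i))" by (rule phi_endo) (simp add: lookup_sub_Nil)
      then have "phi (sub U i) (Poly_Mapping.lookup SR) \<in> V"
        using V unfolding T_space_def by blast
      then show "Poly_Mapping.lookup (Phi (sub U i) SR) \<in> V" by simp
    qed
    then show "fa_comm (Poly_Mapping.lookup SR) u \<in> V"
      unfolding comm by (rule T_space_sum[OF V(1) finite_lessThan])
  qed
qed

end
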